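(* Let $x\in\mathbb{R}$. Every real $y$ that is computable from $x$ can be expressed as a finite sum of reals each of which is Turing equivalent to $x$.
   Context: Turing reducibility between reals is the usual one (e.g. via binary/decimal expansions). *)

theory Defs
  imports Complex_Main
begin

datatype recf =
    Zero
  | Succ
  | Proj nat
  | Comp recf "recf list"
  | Prim recf recf
  | Mn recf
  | Oracle

inductive eval :: "nat set \<Rightarrow> recf \<Rightarrow> nat list \<Rightarrow> nat \<Rightarrow> bool" for A :: "nat set" where
  eval_Zero: "eval A Zero xs 0"
| eval_Succ: "eval A Succ (x # xs) (Suc x)"
| eval_Proj: "i < length xs \<Longrightarrow> eval A (Proj i) xs (xs ! i)"
| eval_Oracle: "eval A Oracle (x # xs) (if x \<in> A then 1 else 0)"
| eval_Comp: "length ys = length gs \<Longrightarrow> (\<forall>i < length gs. eval A (gs ! i) xs (ys ! i))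
      \<Longrightarrow> eval A f ys z \<Longrightarrow> eval A (Comp f gs) xs z"
| eval_Prim0: "eval A g xs y \<Longrightarrow> eval A (Prim g h) (0 # xs) y"
| eval_PrimS: "eval A (Prim g h) (n # xs) y \<Longrightarrow> eval A h (n # y # xs) z
      \<Longrightarrow> eval A (Prim g h) (Suc n # xs) z"
| eval_Mn: "eval A f (n # xs) 0 \<Longrightarrow> (\<forall>m < n. \<exists>y. eval A f (m # xs) (Suc y))
      \<Longrightarrow> eval A (Mn f) xs n"

definition turing_le_set :: "nat set \<Rightarrow> nat set \<Rightarrow> bool" where
  "turing_le_set A B \<longleftrightarrow> (\<exists>f. \<forall>n. eval B f [n] (if n \<in> A then 1 else 0))"

text \<open>For n \<ge> 1 this is the n-th binary digit of the fractional part of x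
  (standard expansion, not ending in 1s); n = 0 records the parity of floor x.
  The integer part is finite information and does not affect the degree.\<close>

definition real_bits :: "real \<Rightarrow> nat set" where
  "real_bits x = {n. odd \<lfloor>2 ^ n * x\<rfloor>}"

definition turing_le_real :: "real \<Rightarrow> real \<Rightarrow> bool" where
  "turing_le_real y x \<longleftrightarrow> turing_le_set (real_bits y) (real_bits x)"

definition turing_equiv_real :: "real \<Rightarrow> real \<Rightarrow> bool" where
  "turing_equiv_real y x \<longleftrightarrow> turing_le_real y x \<and> turing_le_real x y"

end

theory Submission
  imports Defs
begin

primrec constc :: "nat \<Rightarrow> recf" where
  "constc 0 = Zero"
| "constc (Suc k) = Comp Succ [constc k]"

lemma eval_Comp1:
  assumes "eval A g xs y" "eval A f [y] z"
  shows "eval A (Comp f [g]) xs z"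
  by (rule eval_Comp[where ys="[y]"]) (use assms in auto)

lemma eval_Comp2:
  assumes "eval A g1 xs y1" "eval A g2 xs y2" "eval A f [y1, y2] z"
  shows "eval A (Comp f [g1, g2]) xs z"
  by (rule eval_Comp[where ys="[y1, y2]"]) (use assms in \<open>auto simp: less_Suc_eq\<close>)

lemma eval_Proj0: "eval A (Proj 0) (x # xs) x"
  using eval_Proj[of 0 "x # xs" A] by simp

lemma eval_Proj1: "eval A (Proj 1) (x # y # xs) y"
  using eval_Proj[of 1 "x # y # xs" A] by simp

lemma eval_Proj2: "eval A (Proj 2) (x # y # z # xs) z"
  using eval_Proj[of 2 "x # y # z # xs" A] by (simp add: numeral_2_eq_2)

lemma eval_constc: "eval A (constc k) xs k"
proof (induction k)
  case 0
  then show ?case by (simp add: eval_Zero)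
next
  case (Suc k)
  then show ?case by (simp add: eval_Comp1 eval_Succ)
qed

definition addc :: recf where "addc = Prim (Proj 0) (Comp Succ [Proj 1])"
definition mulc :: recf where "mulc = Prim Zero (Comp addc [Proj 1, Proj 2])"

lemma eval_addc: "eval A addc [n, m] (n + m)"
proof (induction n)
  case 0
  then show ?case unfolding addc_def by (intro eval_Prim0) (simp add: eval_Proj0)
next
  case (Suc n)
  have "eval A (Comp Succ [Proj 1]) [n, n + m, m] (Suc (n + m))"
    by (rule eval_Comp1[OF eval_Proj1]) (rule eval_Succ)
  then show ?case using Suc unfolding addc_def by (simp add: eval_PrimS)
qed

lemma eval_mulc: "eval A mulc [n, m] (n * m)"
proof (induction n)
  case 0
  then show ?case unfolding mulc_def by (simp add: eval_Prim0 eval_Zero)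
next
  case (Suc n)
  have "eval A (Comp addc [Proj 1, Proj 2]) [n, n * m, m] (n * m + m)"
    by (rule eval_Comp2[OF eval_Proj1 eval_Proj2]) (rule eval_addc)
  then have "eval A mulc [Suc n, m] (n * m + m)"
    using Suc unfolding mulc_def by (simp add: eval_PrimS)
  then show ?case by (simp add: add.commute)
qed

definition comp1 :: "nat set \<Rightarrow> (nat \<Rightarrow> nat) \<Rightarrow> bool" where
  "comp1 A f \<longleftrightarrow> (\<exists>c. \<forall>n. eval A c [n] (f n))"

definition comp2 :: "nat set \<Rightarrow> (nat \<Rightarrow> nat \<Rightarrow> nat) \<Rightarrow> bool" where
  "comp2 A f \<longleftrightarrow> (\<exists>c. \<forall>n m. eval A c [n, m] (f n m))"

lemma comp1_const: "comp1 A (\<lambda>_. k)"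
  unfolding comp1_def using eval_constc by blast

lemma comp1_id: "comp1 A (\<lambda>n. n)"
  unfolding comp1_def using eval_Proj0 by blast

lemma comp1_oracle: "comp1 A (\<lambda>n. if n \<in> A then 1 else 0)"
  unfolding comp1_def using eval_Oracle[where xs="[]" and A=A] by blast

lemma comp1_comp: "comp1 A f \<Longrightarrow> comp1 A g \<Longrightarrow> comp1 A (\<lambda>n. f (g n))"
  unfolding comp1_def using eval_Comp1 by blast

lemma comp1_comp2: "comp2 A h \<Longrightarrow> comp1 A f \<Longrightarrow> comp1 A g \<Longrightarrow> comp1 A (\<lambda>n. h (f n) (g n))"
  unfolding comp1_def comp2_def using eval_Comp2 by blast

lemma comp2_add: "comp2 A (\<lambda>n m. n + m)"
  unfolding comp2_def using eval_addc by blast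

lemma comp2_mult: "comp2 A (\<lambda>n m. n * m)"
  unfolding comp2_def using eval_mulc by blast

lemma comp2_fst1: "comp1 A g \<Longrightarrow> comp2 A (\<lambda>n m. g n)"
  unfolding comp1_def comp2_def using eval_Comp1[OF eval_Proj0] by blast

lemma comp2_snd1: "comp1 A g \<Longrightarrow> comp2 A (\<lambda>n m. g m)"
  unfolding comp1_def comp2_def using eval_Comp1[OF eval_Proj1] by blast

lemma comp2_comp: "comp2 A h \<Longrightarrow> comp2 A f \<Longrightarrow> comp2 A g \<Longrightarrow> comp2 A (\<lambda>n m. h (f n m) (g n m))"
  unfolding comp2_def
proof (elim exE)
  fix ch cf cg
  assume h: "\<forall>n m. eval A ch [n, m] (h n m)" and f: "\<forall>n m. eval A cf [n, m] (f n m)"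
    and g: "\<forall>n m. eval A cg [n, m] (g n m)"
  have "eval A (Comp ch [cf, cg]) [n, m] (h (f n m) (g n m))" for n m
    using h f g by (blast intro: eval_Comp2)
  then show "\<exists>c. \<forall>n m. eval A c [n, m] (h (f n m) (g n m))" by blast
qed

lemma comp1_rec:
  assumes "comp2 A h"
  shows "comp1 A (rec_nat a h)"
proof -
  obtain c where c: "\<And>n m. eval A c [n, m] (h n m)" using assms unfolding comp2_def by blast
  have "eval A (Prim (constc a) (Comp c [Proj 0, Proj 1])) [n] (rec_nat a h n)" for n
  proof (induction n)
    case 0
    then show ?case by (simp add: eval_Prim0 eval_constc)
  next
    case (Suc n)
    have "eval A (Comp c [Proj 0, Proj 1]) [n, rec_nat a h n] (h n (rec_nat a h n))"
      by (rule eval_Comp2[OF eval_Proj0 eval_Proj1]) (rule c)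
    then show ?case using Suc by (simp add: eval_PrimS)
  qed
  then show ?thesis unfolding comp1_def by blast
qed

lemma comp1_cong: "comp1 A f \<Longrightarrow> (\<And>n. f n = g n) \<Longrightarrow> comp1 A g"
  by (metis ext)

lemma comp1_iszero: "comp1 A (\<lambda>n. if n = 0 then 1 else 0)"
proof -
  have "comp1 A (rec_nat 1 (\<lambda>_ _. 0))" by (intro comp1_rec comp2_fst1 comp1_const)
  then show ?thesis by (rule comp1_cong) (case_tac n, auto)
qed

lemma comp1_ev: "comp1 A (\<lambda>n. if even n then 1 else 0)"
proof -
  have "comp1 A (rec_nat 1 (\<lambda>_ y. if y = 0 then 1 else 0))"
    by (intro comp1_rec comp2_snd1 comp1_iszero)
  moreover have "rec_nat 1 (\<lambda>_ y. if y = 0 then 1 else 0) n = (if even n then 1 else 0)" for n :: nat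
    by (induction n) auto
  ultimately show ?thesis by (rule comp1_cong)
qed

lemma comp1_half: "comp1 A (\<lambda>n. n div 2)"
proof -
  have o: "comp1 A (\<lambda>n. if (if even n then 1 else 0) = (0::nat) then 1 else 0)"
    by (rule comp1_comp[OF comp1_iszero comp1_ev])
  have "comp2 A (\<lambda>n y. y + (if (if even n then 1 else 0) = (0::nat) then 1 else 0))"
    by (rule comp2_comp[OF comp2_add comp2_snd1[OF comp1_id] comp2_fst1[OF o]])
  then have "comp1 A (rec_nat 0 (\<lambda>n y. y + (if (if even n then 1 else 0) = (0::nat) then 1 else 0)))"
    by (rule comp1_rec)
  moreover have "rec_nat 0 (\<lambda>n y. y + (if (if even n then 1 else 0) = (0::nat) then 1 else 0)) n = n div 2" for n :: nat
    by (induction n) auto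
  ultimately show ?thesis by (rule comp1_cong)
qed

definition dec :: "nat set \<Rightarrow> (nat \<Rightarrow> bool) \<Rightarrow> bool" where
  "dec A P \<longleftrightarrow> comp1 A (\<lambda>n. if P n then 1 else 0)"

lemma dec_iff_turing: "dec A (\<lambda>n. n \<in> S) \<longleftrightarrow> turing_le_set S A"
  unfolding dec_def comp1_def turing_le_set_def by simp

lemma dec_cong: "dec A P \<Longrightarrow> (\<And>n. P n = Q n) \<Longrightarrow> dec A Q"
proof -
  assume "dec A P" "\<And>n. P n = Q n"
  then have "P = Q" by (intro ext) auto
  with \<open>dec A P\<close> show ?thesis by simp
qed

lemma dec_const: "dec A (\<lambda>n. b)"
  unfolding dec_def by (cases b) (simp_all add: comp1_const)

lemma dec_oracle: "dec A (\<lambda>n. n \<in> A)"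
  unfolding dec_def by (rule comp1_oracle)

lemma dec_comp: "dec A P \<Longrightarrow> comp1 A g \<Longrightarrow> dec A (\<lambda>n. P (g n))"
  unfolding dec_def by (drule comp1_comp) auto

lemma dec_not: "dec A P \<Longrightarrow> dec A (\<lambda>n. \<not> P n)"
  unfolding dec_def
  by (drule comp1_comp[OF comp1_iszero]) (erule comp1_cong, simp)

lemma dec_and: "dec A P \<Longrightarrow> dec A Q \<Longrightarrow> dec A (\<lambda>n. P n \<and> Q n)"
  unfolding dec_def
  by (drule (1) comp1_comp2[OF comp2_mult]) (erule comp1_cong, simp)

lemma dec_or: "dec A P \<Longrightarrow> dec A Q \<Longrightarrow> dec A (\<lambda>n. P n \<or> Q n)"
  using dec_not[of A "\<lambda>n. \<not> P n \<and> \<not> Q n"] dec_and[OF dec_not dec_not] by simp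

lemma dec_even: "dec A (\<lambda>n. even n)"
  unfolding dec_def by (rule comp1_ev)

lemma dec_zero: "dec A (\<lambda>n. n = 0)"
  unfolding dec_def by (rule comp1_iszero)

lemma comp1_div4: "comp1 A (\<lambda>n. n div 4)"
  by (rule comp1_cong[OF comp1_comp[OF comp1_half comp1_half]]) (simp add: div_mult2_eq[symmetric])

lemma comp1_lin: "comp1 A (\<lambda>n. 4 * n + k)"
  by (rule comp1_comp2[OF comp2_add comp1_comp2[OF comp2_mult comp1_const comp1_id] comp1_const])

lemma dec_mod4: "dec A (\<lambda>n. n mod 4 = r)"
proof -
  have e2: "dec A (\<lambda>n. even (n div 2))" by (rule dec_comp[OF dec_even comp1_half])
  have "r \<ge> 4 \<or> r = 0 \<or> r = 1 \<or> r = 2 \<or> r = 3" by arith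
  then show ?thesis
  proof (elim disjE)
    assume "r \<ge> 4" then show ?thesis by (rule_tac dec_cong[OF dec_const[of A False]]) auto
  next
    assume "r = 0" then show ?thesis
      by (rule_tac dec_cong[OF dec_and[OF dec_even e2]]) presburger
  next
    assume "r = 1" then show ?thesis
      by (rule_tac dec_cong[OF dec_and[OF dec_not[OF dec_even] e2]]) presburger
  next
    assume "r = 2" then show ?thesis
      by (rule_tac dec_cong[OF dec_and[OF dec_even dec_not[OF e2]]]) presburger
  next
    assume "r = 3" then show ?thesis
      by (rule_tac dec_cong[OF dec_and[OF dec_not[OF dec_even] dec_not[OF e2]]]) presburger
  qed
qed

definition bt :: "nat set \<Rightarrow> nat \<Rightarrow> real" where
  "bt S k = (if k \<in> S \<and> 0 < k then (1/2) ^ k else 0)"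

definition bs :: "nat set \<Rightarrow> real" where
  "bs S = suminf (bt S)"

lemma bt_nonneg: "0 \<le> bt S k"
  by (simp add: bt_def)

lemma summable_bt: "summable (bt S)"
proof (rule summable_comparison_test[where g="\<lambda>k. (1/2::real) ^ k"])
  show "\<exists>N. \<forall>n\<ge>N. norm (bt S n) \<le> (1/2) ^ n" by (auto simp: bt_def)
  show "summable (\<lambda>k. (1/2::real) ^ k)" by (rule summable_geometric) simp
qed

lemma floor_double:
  fixes u :: real
  shows "\<lfloor>2 * u\<rfloor> = 2 * \<lfloor>u\<rfloor> + (if odd \<lfloor>2 * u\<rfloor> then 1 else 0)"
proof -
  have a: "2 * \<lfloor>u\<rfloor> \<le> \<lfloor>2 * u\<rfloor>"
    by (metis floor_less_cancel floor_mono le_floor_iff mult_left_mono of_int_floor_le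
        of_int_mult of_int_numeral zero_le_numeral)
  have b: "\<lfloor>2 * u\<rfloor> \<le> 2 * \<lfloor>u\<rfloor> + 1"
  proof -
    have "u < \<lfloor>u\<rfloor> + 1" by linarith
    then have "2 * u < 2 * \<lfloor>u\<rfloor> + 2" by linarith
    then show ?thesis by linarith
  qed
  from a b show ?thesis by presburger
qed

lemma tail_univ: "suminf (\<lambda>i. bt UNIV (i + Suc n)) = (1/2) ^ n"
proof -
  have "(\<lambda>i. (1/2::real) ^ Suc n * (1/2) ^ i) sums ((1/2) ^ Suc n * (1 / (1 - 1/2)))"
    by (rule sums_mult) (rule geometric_sums, simp)
  moreover have "(\<lambda>i. bt UNIV (i + Suc n)) = (\<lambda>i. (1/2::real) ^ Suc n * (1/2) ^ i)"
    by (auto simp: bt_def power_add)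
  ultimately show ?thesis by (simp add: sums_iff)
qed

lemma bs_univ: "bs UNIV = 1"
proof -
  have "bs UNIV = suminf (\<lambda>i. bt UNIV (i + Suc 0)) + sum (bt UNIV) {..<Suc 0}"
    unfolding bs_def by (rule suminf_split_initial_segment[OF summable_bt])
  then show ?thesis using tail_univ[of 0] by (simp add: bt_def)
qed

lemma tail_lt:
  assumes "j > n" "j \<notin> S"
  shows "suminf (\<lambda>i. bt S (i + Suc n)) < (1/2) ^ n"
proof -
  have sS: "summable (\<lambda>i. bt S (i + Suc n))" and sC: "summable (\<lambda>i. bt (- S) (i + Suc n))"
    by (rule summable_ignore_initial_segment[OF summable_bt])+
  have "suminf (\<lambda>i. bt S (i + Suc n)) + suminf (\<lambda>i. bt (- S) (i + Suc n))
      = suminf (\<lambda>i. bt S (i + Suc n) + bt (- S) (i + Suc n))"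
    by (rule suminf_add[OF sS sC])
  also have "\<dots> = suminf (\<lambda>i. bt UNIV (i + Suc n))"
    by (rule arg_cong[where f=suminf]) (auto simp: bt_def)
  also have "\<dots> = (1/2) ^ n" by (rule tail_univ)
  finally have eq: "suminf (\<lambda>i. bt S (i + Suc n)) + suminf (\<lambda>i. bt (- S) (i + Suc n)) = (1/2) ^ n" .
  have "sum (\<lambda>i. bt (- S) (i + Suc n)) {j - Suc n} \<le> suminf (\<lambda>i. bt (- S) (i + Suc n))"
    by (rule sum_le_suminf[OF sC]) (auto simp: bt_nonneg)
  moreover have "sum (\<lambda>i. bt (- S) (i + Suc n)) {j - Suc n} > 0"
    using assms by (simp add: bt_def)
  ultimately show ?thesis using eq by linarith
qed

lemma tail_nonneg: "0 \<le> suminf (\<lambda>i. bt S (i + Suc n))"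
  by (rule suminf_nonneg[OF summable_ignore_initial_segment[OF summable_bt]]) (rule bt_nonneg)

primrec jj :: "nat set \<Rightarrow> nat \<Rightarrow> int" where
  "jj S 0 = 0"
| "jj S (Suc n) = 2 * jj S n + (if Suc n \<in> S then 1 else 0)"

lemma jj_sum: "real_of_int (jj S n) = 2 ^ n * sum (bt S) {..<Suc n}"
proof (induction n)
  case 0
  then show ?case by (simp add: bt_def)
next
  case (Suc n)
  have "(2::real) ^ Suc n * (1/2) ^ Suc n = 1" by (simp add: power_mult_distrib[symmetric])
  then show ?case using Suc by (simp add: bt_def algebra_simps)
qed

lemma jj_odd: "odd (jj S n) \<longleftrightarrow> 0 < n \<and> n \<in> S"
  by (cases n) auto

lemma bits_bs:
  assumes "\<forall>N. \<exists>j>N. j \<notin> S"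
  shows "real_bits (of_int m + bs S) = {n. (n = 0 \<and> odd m) \<or> (0 < n \<and> n \<in> S)}"
proof -
  have fl: "\<lfloor>2 ^ n * (of_int m + bs S)\<rfloor> = 2 ^ n * m + jj S n" for n
  proof -
    let ?t = "suminf (\<lambda>i. bt S (i + Suc n))"
    have split: "bs S = ?t + sum (bt S) {..<Suc n}"
      unfolding bs_def by (rule suminf_split_initial_segment[OF summable_bt])
    obtain j where j: "j > n" "j \<notin> S" using assms by blast
    have t1: "?t < (1/2) ^ n" by (rule tail_lt[OF j])
    have t0: "0 \<le> ?t" by (rule tail_nonneg)
    have eq: "2 ^ n * (of_int m + bs S) = of_int (2 ^ n * m + jj S n) + 2 ^ n * ?t"
      using split jj_sum[of S n] by (simp add: algebra_simps)
    moreover have "2 ^ n * ?t < 1"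
    proof -
      have "(2::real) ^ n * ?t < 2 ^ n * (1/2) ^ n" using t1 by simp
      also have "\<dots> = 1" by (simp add: power_mult_distrib[symmetric])
      finally show ?thesis .
    qed
    moreover have "0 \<le> 2 ^ n * ?t" using t0 by simp
    ultimately show ?thesis by (intro floor_unique) (simp only: eq, linarith)+
  qed
  show ?thesis
  proof (rule set_eqI)
    fix n
    have "n \<in> real_bits (of_int m + bs S) \<longleftrightarrow> odd (2 ^ n * m + jj S n)"
      unfolding real_bits_def using fl[of n] by simp
    also have "\<dots> \<longleftrightarrow> (n = 0 \<and> odd m) \<or> (0 < n \<and> n \<in> S)"
      by (cases n) auto
    finally show "n \<in> real_bits (of_int m + bs S) \<longleftrightarrow> n \<in> {n. (n = 0 \<and> odd m) \<or> (0 < n \<and> n \<in> S)}"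
      by simp
  qed
qed

lemma bs_real_bits: "t = of_int \<lfloor>t\<rfloor> + bs (real_bits t)"
proof -
  define a where "a n = \<lfloor>2 ^ n * t\<rfloor>" for n
  define B where "B = real_bits t"
  have step: "a (Suc n) = 2 * a n + (if Suc n \<in> B then 1 else 0)" for n
  proof -
    have "a (Suc n) = \<lfloor>2 * (2 ^ n * t)\<rfloor>" by (simp add: a_def mult.assoc)
    also have "\<dots> = 2 * a n + (if odd \<lfloor>2 * (2 ^ n * t)\<rfloor> then 1 else 0)"
      unfolding a_def by (rule floor_double)
    finally show ?thesis by (simp add: B_def real_bits_def a_def mult.assoc)
  qed
  have ps: "sum (bt B) {..<Suc n} = a n / 2 ^ n - a 0" for n
  proof (induction n)
    case 0
    then show ?case by (simp add: bt_def)
  next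
    case (Suc n)
    have "(1/2::real) ^ Suc n = 1 / 2 ^ Suc n" by (simp add: power_divide)
    then show ?case using Suc step[of n] by (simp add: bt_def field_simps)
  qed
  have lim: "(\<lambda>n. a n / 2 ^ n) \<longlonglongrightarrow> t"
  proof (rule tendsto_sandwich[where f="\<lambda>n. t - (1/2) ^ n" and h="\<lambda>n. t"])
    show "\<forall>\<^sub>F n in sequentially. t - (1/2) ^ n \<le> a n / 2 ^ n"
    proof (rule always_eventually, rule allI)
      fix n
      have "2 ^ n * t < a n + 1" unfolding a_def by linarith
      then have "t < (a n + 1) / 2 ^ n" by (simp add: field_simps)
      then show "t - (1/2) ^ n \<le> a n / 2 ^ n" by (simp add: power_divide add_divide_distrib)
    qed
    show "\<forall>\<^sub>F n in sequentially. a n / 2 ^ n \<le> t"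
    proof (rule always_eventually, rule allI)
      fix n
      have "a n \<le> 2 ^ n * t" unfolding a_def by linarith
      then show "a n / 2 ^ n \<le> t" by (simp add: field_simps)
    qed
    show "(\<lambda>n. t) \<longlonglongrightarrow> t" by simp
    have "(\<lambda>n. (1/2::real) ^ n) \<longlonglongrightarrow> 0" by (rule LIMSEQ_power_zero) simp
    then show "(\<lambda>n. t - (1/2) ^ n) \<longlonglongrightarrow> t" using tendsto_diff[of "\<lambda>n. t" t sequentially] by force
  qed
  have "(\<lambda>n. sum (bt B) {..<Suc n}) \<longlonglongrightarrow> t - a 0"
    unfolding ps by (intro tendsto_diff lim tendsto_const)
  then have "bt B sums (t - a 0)"
    unfolding sums_def by (rule filterlim_sequentially_Suc[THEN iffD1])
  then have "bs B = t - a 0" unfolding bs_def by (rule sums_unique[symmetric])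
  then show ?thesis by (simp add: a_def B_def)
qed

lemma real_bits_coinf: "\<forall>N. \<exists>j>N. j \<notin> real_bits x"
proof (rule ccontr)
  assume "\<not> ?thesis"
  then obtain N where N: "\<And>j. j > N \<Longrightarrow> j \<in> real_bits x" by auto
  define a where "a n = \<lfloor>2 ^ n * x\<rfloor>" for n
  have step: "a (Suc n) = 2 * a n + (if odd (a (Suc n)) then 1 else 0)" for n
  proof -
    have "a (Suc n) = \<lfloor>2 * (2 ^ n * x)\<rfloor>" by (simp add: a_def mult.assoc)
    also have "\<dots> = 2 * a n + (if odd \<lfloor>2 * (2 ^ n * x)\<rfloor> then 1 else 0)"
      unfolding a_def by (rule floor_double)
    finally show ?thesis by (simp add: a_def mult.assoc)
  qed
  have oddj: "odd (a j)" if "j > N" for j using N[OF that] by (simp add: real_bits_def a_def)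
  have grow: "a (N + d) + 1 = 2 ^ d * (a N + 1)" for d
  proof (induction d)
    case 0 then show ?case by simp
  next
    case (Suc d)
    have "a (Suc (N + d)) = 2 * a (N + d) + 1" using step[of "N + d"] oddj[of "Suc (N + d)"] by simp
    then show ?case using Suc by (simp add: algebra_simps)
  qed
  define c where "c = (of_int (a N) + 1) / (2::real) ^ N"
  have up: "x < c"
  proof -
    have "2 ^ N * x < a N + 1" unfolding a_def by linarith
    then show ?thesis unfolding c_def by (simp add: field_simps)
  qed
  have low: "c - (1/2) ^ (N + d) \<le> x" for d
  proof -
    have "a (N + d) \<le> 2 ^ (N + d) * x" unfolding a_def by linarith
    then have "real_of_int (2 ^ d * (a N + 1)) - 1 \<le> 2 ^ (N + d) * x"
      using grow[of d] by (metis add_diff_cancel_right' of_int_1 of_int_add of_int_diff)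
    then have "2 ^ d * (of_int (a N) + 1) - 1 \<le> 2 ^ N * 2 ^ d * x" by (simp add: power_add)
    then have "(2 ^ d * (of_int (a N) + 1) - 1) / (2 ^ N * 2 ^ d) \<le> x"
      by (simp add: field_simps)
    moreover have "(2 ^ d * (of_int (a N) + 1) - 1) / (2 ^ N * 2 ^ d) = c - (1/2) ^ (N + d)"
      unfolding c_def by (simp add: field_simps power_add power_divide)
    ultimately show ?thesis by simp
  qed
  have "(\<lambda>d. (1/2::real) ^ (N + d)) \<longlonglongrightarrow> 0"
  proof -
    have "(\<lambda>d. (1/2::real) ^ N * (1/2) ^ d) \<longlonglongrightarrow> 0"
      by (intro tendsto_mult_right_zero LIMSEQ_power_zero) simp
    then show ?thesis by (simp add: power_add)
  qed
  then have "\<forall>\<^sub>F d in sequentially. (1/2::real) ^ (N + d) < c - x"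
    using up by (simp add: order_tendstoD(2))
  then obtain d where "(1/2::real) ^ (N + d) < c - x" by (auto dest: eventually_happens)
  with low[of d] show False by linarith
qed



lemma pw_gen:
  assumes d: "\<not> (P k \<and> Q k)" and e1: "P k \<Longrightarrow> odd k" and e2: "Q k \<Longrightarrow> even k"
  shows "bt {n. (even n \<and> n \<in> B) \<or> P n} k + bt {n. (odd n \<and> n \<in> B) \<or> Q n} k + bt {n. \<not> (P n \<or> Q n)} k = bt B k + bt UNIV k"
  using d e1 e2 unfolding bt_def
  by (cases "P k"; cases "Q k"; cases "k \<in> B"; cases "even k"; simp)

lemma mod4_lin: "(4 * j + r) mod 4 = r mod 4" "(4 * j + r) div 4 = j + r div 4" for j r :: nat
  by simp_all


lemma div4_simps[simp]: "Suc (4 * j) div 4 = j" "Suc (Suc (4 * j)) div 4 = j" "Suc (Suc (Suc (4 * j))) div 4 = j"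
  "Suc (4 * j) mod 4 = 1" "Suc (Suc (4 * j)) mod 4 = 2" "Suc (Suc (Suc (4 * j))) mod 4 = 3"
  "(4 * j + 1) div 4 = j" "(4 * j + 2) div 4 = j" "(4 * j + 3) div 4 = j"
  "(4 * j + 1) mod 4 = 1" "(4 * j + 2) mod 4 = 2" "(4 * j + 3) mod 4 = 3" for j :: nat
  by presburger+


theorem mainTheorem3:
  fixes x y :: real
  assumes "turing_le_real y x"
  shows "\<exists>zs :: real list. zs \<noteq> [] \<and> (\<forall>z \<in> set zs. turing_equiv_real z x) \<and> y = sum_list zs"
proof -
  define A where "A = real_bits x"
  define B where "B = real_bits y"
  have yB: "turing_le_set B A" using assms unfolding turing_le_real_def A_def B_def .
  have decB: "dec A (\<lambda>n. n \<in> B)" using yB by (simp add: dec_iff_turing)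
  have coA: "\<forall>N. \<exists>j>N. j \<notin> A" unfolding A_def by (rule real_bits_coinf)
  define V1 where "V1 = (\<lambda>n::nat. (n mod 4 = 1 \<and> n div 4 \<in> A) \<or> n mod 4 = 3)"
  define V2 where "V2 = (\<lambda>n::nat. n mod 4 = 2 \<and> n div 4 \<in> A)"
  define S1 where "S1 = {n. (even n \<and> n \<in> B) \<or> V1 n}"
  define S2 where "S2 = {n. (odd n \<and> n \<in> B) \<or> V2 n}"
  define S3 where "S3 = {n. \<not> (V1 n \<or> V2 n)}"
  define z1 where "z1 = of_int (\<lfloor>y\<rfloor> - 1) + bs S1"
  define z2 where "z2 = of_int 0 + bs S2"
  define z3 where "z3 = of_int 0 + bs S3"
  have pw: "bt S1 k + bt S2 k + bt S3 k = bt B k + bt UNIV k" for k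
  proof -
    have h1: "k mod 4 = 1 \<or> k mod 4 = 3 \<Longrightarrow> odd k" by presburger
    have h2: "k mod 4 = 2 \<Longrightarrow> even k" by presburger
    have d: "\<not> (V1 k \<and> V2 k)" unfolding V1_def V2_def by auto
    have e1: "V1 k \<Longrightarrow> odd k" using h1 unfolding V1_def by blast
    have e2: "V2 k \<Longrightarrow> even k" using h2 unfolding V2_def by blast
    show ?thesis unfolding S1_def S2_def S3_def by (rule pw_gen[where P=V1 and Q=V2, OF d e1 e2])
  qed
  have "bs S1 + bs S2 + bs S3 = bs B + bs UNIV"
  proof -
    have "bs S1 + bs S2 + bs S3 = suminf (\<lambda>k. bt S1 k + bt S2 k) + suminf (bt S3)"
      unfolding bs_def by (simp add: suminf_add summable_bt)
    also have "\<dots> = suminf (\<lambda>k. bt S1 k + bt S2 k + bt S3 k)"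
      by (rule suminf_add) (auto intro: summable_add summable_bt)
    also have "\<dots> = suminf (\<lambda>k. bt B k + bt UNIV k)" by (simp only: pw)
    also have "\<dots> = bs B + bs UNIV"
      unfolding bs_def by (rule suminf_add[symmetric]) (auto intro: summable_bt)
    finally show ?thesis .
  qed
  then have sum: "y = z1 + z2 + z3"
    using bs_real_bits[of y] bs_univ unfolding z1_def z2_def z3_def B_def by simp
  have c1: "\<forall>N. \<exists>j>N. j \<notin> S1"
  proof
    fix N
    obtain j where j: "j > N" "j \<notin> A" using coA by blast
    have "4 * j + 1 > N" "4 * j + 1 \<notin> S1" using j unfolding S1_def V1_def by auto
    then show "\<exists>j>N. j \<notin> S1" by blast
  qed
  have c2: "\<forall>N. \<exists>j>N. j \<notin> S2"
  proof
    fix N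
    have "4 * N + 4 > N" "4 * N + 4 \<notin> S2" unfolding S2_def V2_def by auto
    then show "\<exists>j>N. j \<notin> S2" by blast
  qed
  have c3: "\<forall>N. \<exists>j>N. j \<notin> S3"
  proof
    fix N
    have "4 * N + 3 > N" "4 * N + 3 \<notin> S3" unfolding S3_def V1_def by auto
    then show "\<exists>j>N. j \<notin> S3" by blast
  qed
  have b1: "real_bits z1 = {n. (n = 0 \<and> odd (\<lfloor>y\<rfloor> - 1)) \<or> (0 < n \<and> n \<in> S1)}"
    unfolding z1_def by (rule bits_bs[OF c1])
  have b2: "real_bits z2 = {n. 0 < n \<and> n \<in> S2}"
    unfolding z2_def using bits_bs[OF c2, of 0] by simp
  have b3: "real_bits z3 = {n. 0 < n \<and> n \<in> S3}"
    unfolding z3_def using bits_bs[OF c3, of 0] by simp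
  have odd0: "0 \<in> B \<longleftrightarrow> odd \<lfloor>y\<rfloor>"
    unfolding B_def real_bits_def by simp
  have dA4: "dec A (\<lambda>n. n div 4 \<in> A)" by (rule dec_comp[OF dec_oracle comp1_div4])
  have dV1: "dec A V1" unfolding V1_def
    by (intro dec_or dec_and dec_mod4 dA4)
  have dV2: "dec A V2" unfolding V2_def
    by (intro dec_or dec_and dec_mod4 dA4)
  have dpos: "dec A (\<lambda>n. 0 < n)"
    by (rule dec_cong[OF dec_not[OF dec_zero]]) auto
  have le1: "turing_le_set (real_bits z1) A"
  proof -
    have "dec A (\<lambda>n. (n = 0 \<and> \<not> (0 \<in> B)) \<or> (0 < n \<and> ((even n \<and> n \<in> B) \<or> V1 n)))"
      by (intro dec_or dec_and dec_zero dec_not dec_const dpos dec_even decB dV1)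
    then have "dec A (\<lambda>n. n \<in> real_bits z1)"
      by (rule dec_cong) (simp add: b1 odd0 S1_def)
    then show ?thesis by (simp add: dec_iff_turing)
  qed
  have le2: "turing_le_set (real_bits z2) A"
  proof -
    have "dec A (\<lambda>n. 0 < n \<and> ((\<not> even n \<and> n \<in> B) \<or> V2 n))"
      by (intro dec_or dec_and dec_not dpos dec_even decB dV2)
    then have "dec A (\<lambda>n. n \<in> real_bits z2)"
      by (rule dec_cong) (simp add: b2 S2_def)
    then show ?thesis by (simp add: dec_iff_turing)
  qed
  have le3: "turing_le_set (real_bits z3) A"
  proof -
    have "dec A (\<lambda>n. 0 < n \<and> \<not> (V1 n \<or> V2 n))"
      by (intro dec_or dec_and dec_not dpos dV1 dV2)
    then have "dec A (\<lambda>n. n \<in> real_bits z3)"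
      by (rule dec_cong) (simp add: b3 S3_def)
    then show ?thesis by (simp add: dec_iff_turing)
  qed
  have ge1: "turing_le_set A (real_bits z1)"
  proof -
    have "dec (real_bits z1) (\<lambda>n. 4 * n + 1 \<in> real_bits z1)"
      by (rule dec_comp[OF dec_oracle comp1_lin])
    then have "dec (real_bits z1) (\<lambda>n. n \<in> A)"
      by (rule dec_cong) (simp add: b1 S1_def V1_def)
    then show ?thesis by (simp add: dec_iff_turing)
  qed
  have ge2: "turing_le_set A (real_bits z2)"
  proof -
    have "dec (real_bits z2) (\<lambda>n. 4 * n + 2 \<in> real_bits z2)"
      by (rule dec_comp[OF dec_oracle comp1_lin])
    then have "dec (real_bits z2) (\<lambda>n. n \<in> A)"
      by (rule dec_cong) (simp add: b2 S2_def V2_def)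
    then show ?thesis by (simp add: dec_iff_turing)
  qed
  have ge3: "turing_le_set A (real_bits z3)"
  proof -
    have "dec (real_bits z3) (\<lambda>n. \<not> (4 * n + 1 \<in> real_bits z3))"
      by (rule dec_not[OF dec_comp[OF dec_oracle comp1_lin]])
    then have "dec (real_bits z3) (\<lambda>n. n \<in> A)"
      by (rule dec_cong) (simp add: b3 S3_def V1_def V2_def)
    then show ?thesis by (simp add: dec_iff_turing)
  qed
  have eq: "\<forall>z \<in> set [z1, z2, z3]. turing_equiv_real z x"
    using le1 le2 le3 ge1 ge2 ge3
    unfolding turing_equiv_real_def turing_le_real_def A_def by simp
  show ?thesis
    by (rule exI[where x="[z1, z2, z3]"]) (use eq sum in simp)
qed

end
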